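(* Let $C_S(2):=8\sqrt{2\pi(e+256)}$ and $A(t)=e^{t^2}-1$. For every mesh size vector $h=(h_1,h_2)$, $$\|u\|_A\le C_S(2)\|u\|_{W^{1,2}}\quad\text{for all }u\in W^{1,2}(\mathbb{R}^2_h),$$ which is equivalent to $\sum_{x\in\mathbb{R}^2_h}A\big(\frac{|u(x)|}{C_S(2)\|u\|_{W^{1,2}}}\big)\mathbf{h}\le1$ for all $u\in W^{1,2}(\mathbb{R}^2_h)\setminus\{0\}$. In particular, $\|u\|_{L^p}\le 2C_S(2)\,p\,\|u\|_{W^{1,2}}$ for all $u\in W^{1,2}(\mathbb{R}^2_h)$ and all $p\ge2$.
   Context: $h_1,h_2>0$, $\mathbb{R}^2_h=\{(h_1z_1,h_2z_2):z_i\in\mathbb{Z}\}$, $\mathbf{h}=h_1h_2$, $D_i^+u(x)=(u(x+h_ie_i)-u(x))/h_i$. $\|u\|_{L^p}=(\sum_{x\in\mathbb{R}^2_h}|u(x)|^p\mathbf{h})^{1/p}$, $\|u\|_{W^{1,2}}^2=\sum_{x}|u(x)|^2\mathbf{h}+\sum_{i=1}^2\sum_x|D_i^+u(x)|^2\mathbf{h}$ (sums over $\mathbb{R}^2_h$), $W^{1,2}(\mathbb{R}^2_h)=\{u:\|u\|_{W^{1,2}}<\infty\}$. The Orlicz norm is $\|u\|_A=\inf\{k>0:\sum_{x\in\mathbb{R}^2_h}A(|u(x)|/k)\mathbf{h}\le1\}$. *)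

theory Defs
  imports "HOL-Analysis.Analysis"
begin

text \<open>A grid function u on the lattice R^2_h = {(h1 z1, h2 z2)} is represented by its
values at the integer indices: u (z1, z2) is the value at (h1 z1, h2 z2).\<close>

type_synonym gridfun = "int \<times> int \<Rightarrow> real"

definition D1p :: "real \<Rightarrow> gridfun \<Rightarrow> gridfun" where
  "D1p h1 u z = (u (fst z + 1, snd z) - u z) / h1"

definition D2p :: "real \<Rightarrow> gridfun \<Rightarrow> gridfun" where
  "D2p h2 u z = (u (fst z, snd z + 1) - u z) / h2"

definition in_W12 :: "real \<Rightarrow> real \<Rightarrow> gridfun \<Rightarrow> bool" where
  "in_W12 h1 h2 u \<longleftrightarrow>
     (\<lambda>z. (u z)\<^sup>2 * (h1 * h2)) summable_on UNIV \<and>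
     (\<lambda>z. (D1p h1 u z)\<^sup>2 * (h1 * h2)) summable_on UNIV \<and>
     (\<lambda>z. (D2p h2 u z)\<^sup>2 * (h1 * h2)) summable_on UNIV"

definition W12_norm :: "real \<Rightarrow> real \<Rightarrow> gridfun \<Rightarrow> real" where
  "W12_norm h1 h2 u = sqrt ((\<Sum>\<^sub>\<infinity>z. (u z)\<^sup>2 * (h1 * h2))
      + (\<Sum>\<^sub>\<infinity>z. (D1p h1 u z)\<^sup>2 * (h1 * h2))
      + (\<Sum>\<^sub>\<infinity>z. (D2p h2 u z)\<^sup>2 * (h1 * h2)))"

definition Lp_norm :: "real \<Rightarrow> real \<Rightarrow> real \<Rightarrow> gridfun \<Rightarrow> real" where
  "Lp_norm p h1 h2 u = (\<Sum>\<^sub>\<infinity>z. \<bar>u z\<bar> powr p * (h1 * h2)) powr (1 / p)"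

text \<open>Orlicz (Luxemburg) norm; the sum must converge for the condition to be meaningful.\<close>
definition orlicz_norm :: "(real \<Rightarrow> real) \<Rightarrow> real \<Rightarrow> real \<Rightarrow> gridfun \<Rightarrow> real" where
  "orlicz_norm A h1 h2 u = Inf {k. k > 0 \<and>
      (\<lambda>z. A (\<bar>u z\<bar> / k) * (h1 * h2)) summable_on UNIV \<and>
      (\<Sum>\<^sub>\<infinity>z. A (\<bar>u z\<bar> / k) * (h1 * h2)) \<le> 1}"

definition A_exp :: "real \<Rightarrow> real" where
  "A_exp t = exp (t\<^sup>2) - 1"

definition C_S2 :: real where
  "C_S2 = 8 * sqrt (2 * pi * (exp 1 + 256))"

end

theory Submission
  imports Defs "HOL-Analysis.Analysis"
begin


lemma tel_int: "(\<Sum>j\<in>{a..<a + int n}. (f::int\<Rightarrow>real) j - f (j+1)) = f a - f (a + int n)"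
proof (induction n)
  case 0 then show ?case by simp
next
  case (Suc n)
  have e: "{a..<a + int (Suc n)} = insert (a + int n) {a..<a + int n}" by auto
  show ?case unfolding e using Suc by (simp add: algebra_simps)
qed

lemma line_bound:
  fixes f :: "int \<Rightarrow> real"
  assumes "\<And>j. j \<ge> a1 \<Longrightarrow> f j = 0" and "a0 \<le> a"
  shows "\<bar>f a\<bar> \<le> (\<Sum>j\<in>{a0..<a1}. \<bar>f (j+1) - f j\<bar>)"
proof (cases "a < a1")
  case False then show ?thesis using assms by (simp add: sum_nonneg)
next
  case True
  define n where "n = nat (a1 - a)"
  have an: "a + int n = a1" using True n_def by simp
  have "f a = (\<Sum>j\<in>{a..<a1}. f j - f (j+1))" using tel_int[where a=a and n=n and f=f] an assms(1) by simp
  also have "\<bar>\<dots>\<bar> \<le> (\<Sum>j\<in>{a..<a1}. \<bar>f j - f (j+1)\<bar>)" by (rule sum_abs)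
  also have "\<dots> = (\<Sum>j\<in>{a..<a1}. \<bar>f (j+1) - f j\<bar>)" by (simp add: abs_minus_commute)
  also have "\<dots> \<le> (\<Sum>j\<in>{a0..<a1}. \<bar>f (j+1) - f j\<bar>)"
    by (rule sum_mono2) (use assms in auto)
  finally show ?thesis .
qed

lemma gagliardo:
  fixes v :: "int\<times>int \<Rightarrow> real"
  assumes nn: "\<And>z. v z \<ge> 0" and supp: "\<And>z. v z \<noteq> 0 \<Longrightarrow> z \<in> {a0..<a1} \<times> {b0..<b1}"
  shows "(\<Sum>z\<in>{a0..<a1}\<times>{b0..<b1}. (v z)^2) \<le>
     (\<Sum>z\<in>{a0..<a1}\<times>{b0..<b1}. \<bar>v (fst z+1, snd z) - v z\<bar>) *
     (\<Sum>z\<in>{a0..<a1}\<times>{b0..<b1}. \<bar>v (fst z, snd z+1) - v z\<bar>)"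
proof -
  define F where "F y = (\<Sum>j\<in>{a0..<a1}. \<bar>v (j+1, y) - v (j, y)\<bar>)" for y
  define G where "G x = (\<Sum>i\<in>{b0..<b1}. \<bar>v (x, i+1) - v (x, i)\<bar>)" for x
  have vF: "v (x,y) \<le> F y" if "x \<in> {a0..<a1}" for x y
  proof -
    have "\<bar>v (x,y)\<bar> \<le> F y" unfolding F_def
      by (rule line_bound[where f="\<lambda>j. v (j,y)"]) (use supp that in force)+
    then show ?thesis by simp
  qed
  have vG: "v (x,y) \<le> G x" if "y \<in> {b0..<b1}" for x y
  proof -
    have "\<bar>v (x,y)\<bar> \<le> G x" unfolding G_def
      by (rule line_bound[where f="\<lambda>i. v (x,i)"]) (use supp that in force)+
    then show ?thesis by simp
  qed
  have "(\<Sum>z\<in>{a0..<a1}\<times>{b0..<b1}. (v z)^2) \<le> (\<Sum>z\<in>{a0..<a1}\<times>{b0..<b1}. F (snd z) * G (fst z))"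
  proof (rule sum_mono)
    fix z assume z: "z \<in> {a0..<a1}\<times>{b0..<b1}"
    obtain x y where zz: "z = (x,y)" by fastforce
    have Fy: "0 \<le> F y" using order_trans[OF nn[of "(x,y)"] vF[of x y]] z zz by auto
    have "(v z)^2 = v z * v z" by (simp add: power2_eq_square)
    also have "\<dots> \<le> F y * G x"
      by (rule mult_mono) (use z zz vF vG nn Fy in auto)
    finally show "(v z)^2 \<le> F (snd z) * G (fst z)" using zz by simp
  qed
  also have "\<dots> = (\<Sum>y\<in>{b0..<b1}. F y) * (\<Sum>x\<in>{a0..<a1}. G x)"
  proof -
    have "(\<Sum>z\<in>{a0..<a1}\<times>{b0..<b1}. F (snd z) * G (fst z)) = (\<Sum>x\<in>{a0..<a1}. \<Sum>y\<in>{b0..<b1}. F y * G x)"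
      by (simp add: sum.cartesian_product split_def)
    also have "\<dots> = (\<Sum>x\<in>{a0..<a1}. G x * (\<Sum>y\<in>{b0..<b1}. F y))"
      by (simp add: sum_distrib_left mult.commute)
    also have "\<dots> = (\<Sum>y\<in>{b0..<b1}. F y) * (\<Sum>x\<in>{a0..<a1}. G x)"
      by (simp add: sum_distrib_right[symmetric] mult.commute)
    finally show ?thesis .
  qed
  also have "(\<Sum>y\<in>{b0..<b1}. F y) = (\<Sum>z\<in>{a0..<a1}\<times>{b0..<b1}. \<bar>v (fst z+1, snd z) - v z\<bar>)"
    unfolding F_def by (subst sum.swap) (simp add: sum.cartesian_product split_def)
  also have "(\<Sum>x\<in>{a0..<a1}. G x) = (\<Sum>z\<in>{a0..<a1}\<times>{b0..<b1}. \<bar>v (fst z, snd z+1) - v z\<bar>)"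
    unfolding G_def by (simp add: sum.cartesian_product split_def)
  finally show ?thesis .
qed




definition clamp :: "real \<Rightarrow> real \<Rightarrow> real \<Rightarrow> real" where
  "clamp b c s = min (max (s - b) 0) (c - b)"

lemma clamp_nonneg: "b \<le> c \<Longrightarrow> clamp b c s \<ge> 0" by (simp add: clamp_def)
lemma clamp_zero: "s \<le> b \<Longrightarrow> b \<le> c \<Longrightarrow> clamp b c s = 0" by (simp add: clamp_def)
lemma clamp_top: "c \<le> s \<Longrightarrow> clamp b c s = c - b" by (simp add: clamp_def)
lemma clamp_lip: "b \<le> c \<Longrightarrow> \<bar>clamp b c s' - clamp b c s\<bar> \<le> \<bar>s' - s\<bar>"
  by (auto simp: clamp_def min_def max_def)
lemma clamp_mono: "b \<le> c \<Longrightarrow> s \<le> s' \<Longrightarrow> clamp b c s \<le> clamp b c s'"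
  by (auto simp: clamp_def min_def max_def)

lemma clamp_sum:
  assumes "\<delta> \<ge> 0"
  shows "(\<Sum>j<n. clamp (b + real j * \<delta>) (b + real (Suc j) * \<delta>) s) = clamp b (b + real n * \<delta>) s"
proof (induction n)
  case 0 then show ?case by (simp add: clamp_def)
next
  case (Suc n)
  have "clamp b (b + real n * \<delta>) s + clamp (b + real n * \<delta>) (b + real (Suc n) * \<delta>) s
        = clamp b (b + real (Suc n) * \<delta>) s"
  proof -
    have h: "0 \<le> real n * \<delta>" using assms by simp
    show ?thesis unfolding clamp_def of_nat_Suc distrib_right mult_1 min_def max_def using h assms by (smt (verit))
  qed
  then show ?case using Suc by simp
qed

lemma sum_sq_le_sq_sum:
  fixes x :: "nat \<Rightarrow> real"
  assumes "\<And>j. x j \<ge> 0"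
  shows "(\<Sum>j<n. (x j)^2) \<le> (\<Sum>j<n. x j)^2"
proof (induction n)
  case 0 then show ?case by simp
next
  case (Suc n)
  have "0 \<le> (\<Sum>j<n. x j)" by (simp add: assms sum_nonneg)
  then have "0 \<le> 2 * x n * (\<Sum>j<n. x j)" using assms by simp
  then show ?case using Suc by (simp add: power2_eq_square algebra_simps)
qed

lemma layers_edge:
  assumes "\<delta> \<ge> 0"
  shows "(\<Sum>j<n. (clamp (b + real j * \<delta>) (b + real (Suc j) * \<delta>) s'
                 - clamp (b + real j * \<delta>) (b + real (Suc j) * \<delta>) s)^2) \<le> (s' - s)^2"
proof -
  define f where "f j = clamp (b + real j * \<delta>) (b + real (Suc j) * \<delta>) s'
                 - clamp (b + real j * \<delta>) (b + real (Suc j) * \<delta>) s" for j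
  have lec: "b + real j * \<delta> \<le> b + real (Suc j) * \<delta>" for j using assms by (simp add: algebra_simps)
  have "(\<Sum>j<n. (f j)^2) = (\<Sum>j<n. \<bar>f j\<bar>^2)" by simp
  also have "\<dots> \<le> (\<Sum>j<n. \<bar>f j\<bar>)^2" by (rule sum_sq_le_sq_sum) simp
  also have "(\<Sum>j<n. \<bar>f j\<bar>) = \<bar>\<Sum>j<n. f j\<bar>"
  proof (cases "s \<le> s'")
    case True
    then have "\<And>j. f j \<ge> 0" unfolding f_def using clamp_mono[OF lec] by simp
    then show ?thesis by (simp add: sum_nonneg)
  next
    case False
    then have "\<And>j. f j \<le> 0" unfolding f_def using clamp_mono[OF lec] by simp
    then have "(\<Sum>j<n. \<bar>f j\<bar>) = - (\<Sum>j<n. f j)" by (simp add: sum_negf[symmetric])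
    moreover have "(\<Sum>j<n. f j) \<le> 0" using \<open>\<And>j. f j \<le> 0\<close> by (simp add: sum_nonpos)
    ultimately show ?thesis by simp
  qed
  also have "(\<Sum>j<n. f j) = clamp b (b + real n * \<delta>) s' - clamp b (b + real n * \<delta>) s"
    unfolding f_def sum_subtractf clamp_sum[OF assms] by simp
  also have "\<bar>\<dots>\<bar>^2 \<le> (s' - s)^2"
  proof -
    have "b \<le> b + real n * \<delta>" using assms by simp
    from clamp_lip[OF this, of s' s] show ?thesis
      by (metis abs_ge_zero power2_abs power_mono)
  qed
  finally show ?thesis unfolding f_def .
qed




lemma diff_bound:
  fixes T :: "int\<times>int \<Rightarrow> real" and \<sigma> \<tau> :: "int\<times>int \<Rightarrow> int\<times>int"
  assumes R: "finite R" and E: "finite E" and inv: "\<And>z. \<tau> (\<sigma> z) = z"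
    and supp: "\<And>z. T z \<noteq> 0 \<Longrightarrow> z \<in> E"
  shows "(\<Sum>z\<in>R. \<bar>T (\<sigma> z) - T z\<bar>)^2 \<le> 2 * real (card E) * (\<Sum>z\<in>R. (T (\<sigma> z) - T z)^2)"
proof -
  define A where "A = R \<inter> (E \<union> \<tau> ` E)"
  have AR: "A \<subseteq> R" and fA: "finite A" using R by (auto simp: A_def)
  have zero: "\<bar>T (\<sigma> z) - T z\<bar> = 0" if "z \<in> R - A" for z
  proof -
    have "z \<notin> E" using that by (auto simp: A_def)
    moreover have "\<sigma> z \<notin> E"
    proof
      assume "\<sigma> z \<in> E" then have "\<tau> (\<sigma> z) \<in> \<tau> ` E" by blast
      then show False using that inv by (auto simp: A_def)
    qed
    ultimately have "T z = 0" "T (\<sigma> z) = 0" using supp by blast+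
    then show ?thesis by simp
  qed
  have "(\<Sum>z\<in>R. \<bar>T (\<sigma> z) - T z\<bar>) = (\<Sum>z\<in>A. \<bar>T (\<sigma> z) - T z\<bar>)"
    by (rule sum.mono_neutral_right[OF R AR]) (use zero in auto)
  also have "\<dots> = (\<Sum>z\<in>A. \<bar>T (\<sigma> z) - T z\<bar> * 1)" by simp
  finally have "(\<Sum>z\<in>R. \<bar>T (\<sigma> z) - T z\<bar>)^2 \<le> (\<Sum>z\<in>A. \<bar>T (\<sigma> z) - T z\<bar>^2) * (\<Sum>z\<in>A. 1^2)"
    using Cauchy_Schwarz_ineq_sum[of "\<lambda>z. \<bar>T (\<sigma> z) - T z\<bar>" "\<lambda>_. 1::real" A] by simp
  also have "\<dots> = (\<Sum>z\<in>A. (T (\<sigma> z) - T z)^2) * real (card A)" by simp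
  also have "\<dots> \<le> (\<Sum>z\<in>R. (T (\<sigma> z) - T z)^2) * (2 * real (card E))"
  proof (rule mult_mono)
    show "(\<Sum>z\<in>A. (T (\<sigma> z) - T z)^2) \<le> (\<Sum>z\<in>R. (T (\<sigma> z) - T z)^2)"
      by (rule sum_mono2[OF R AR]) simp
    have "card A \<le> card (E \<union> \<tau> ` E)" unfolding A_def by (rule card_mono) (use E in auto)
    also have "\<dots> \<le> card E + card (\<tau> ` E)" by (rule card_Un_le)
    also have "\<dots> \<le> card E + card E" using card_image_le[OF E] by simp
    finally show "real (card A) \<le> 2 * real (card E)" by simp
  qed (auto simp: sum_nonneg)
  finally show ?thesis by (simp add: mult.commute)
qed

lemma layer:
  fixes u :: gridfun and h1 h2 b c :: real
  assumes h1: "h1 > 0" and h2: "h2 > 0" and b: "0 < b" "b \<le> c"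
    and fin: "finite {z. b < \<bar>u z\<bar>}" and sub: "{z. b < \<bar>u z\<bar>} \<subseteq> {a0..<a1}\<times>{b0..<b1}"
  shows "(c-b)^2 * real (card {z. c < \<bar>u z\<bar>}) \<le> real (card {z. b < \<bar>u z\<bar>}) *
     (\<Sum>z\<in>{a0..<a1}\<times>{b0..<b1}. ((D1p h1 (\<lambda>z. clamp b c \<bar>u z\<bar>) z)^2
        + (D2p h2 (\<lambda>z. clamp b c \<bar>u z\<bar>) z)^2) * (h1*h2))"
proof -
  define E where "E = {z. b < \<bar>u z\<bar>}"
  define Ec where "Ec = {z. c < \<bar>u z\<bar>}"
  define R where "R = {a0..<a1}\<times>{b0..<b1}"
  define T where "T z = clamp b c \<bar>u z\<bar>" for z
  define cE where "cE = real (card E)"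
  define Q1 where "Q1 = (\<Sum>z\<in>R. (D1p h1 T z)^2)"
  define Q2 where "Q2 = (\<Sum>z\<in>R. (D2p h2 T z)^2)"
  define X1 where "X1 = (\<Sum>z\<in>R. \<bar>T (fst z+1, snd z) - T z\<bar>)"
  define X2 where "X2 = (\<Sum>z\<in>R. \<bar>T (fst z, snd z+1) - T z\<bar>)"
  have fR: "finite R" by (simp add: R_def)
  have fE: "finite E" using fin by (simp add: E_def)
  have Tnn: "\<And>z. T z \<ge> 0" using b by (simp add: T_def clamp_nonneg)
  have Tsupp: "T z \<noteq> 0 \<Longrightarrow> z \<in> E" for z
    using clamp_zero[of "\<bar>u z\<bar>" b c] b by (force simp: T_def E_def)
  have gag: "(\<Sum>z\<in>R. (T z)^2) \<le> X1 * X2" unfolding R_def X1_def X2_def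
    by (rule gagliardo[OF Tnn]) (use Tsupp sub E_def in blast)
  have EcE: "Ec \<subseteq> E" using b by (auto simp: Ec_def E_def)
  have "(c-b)^2 * real (card Ec) = (\<Sum>z\<in>Ec. (T z)^2)"
  proof -
    have "\<And>z. z \<in> Ec \<Longrightarrow> T z = c - b" by (simp add: T_def Ec_def clamp_top)
    then show ?thesis by (simp add: mult.commute)
  qed
  also have "\<dots> \<le> (\<Sum>z\<in>R. (T z)^2)"
    by (rule sum_mono2[OF fR]) (use EcE sub in \<open>auto simp: E_def R_def\<close>)
  also have "\<dots> \<le> X1 * X2" by (rule gag)
  also have "X1 * X2 \<le> cE * ((Q1 + Q2) * (h1*h2))"
  proof -
    have d1: "T (fst z+1, snd z) - T z = h1 * D1p h1 T z" for z using h1 by (simp add: D1p_def)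
    have d2: "T (fst z, snd z+1) - T z = h2 * D2p h2 T z" for z using h2 by (simp add: D2p_def)
    have "X1^2 \<le> 2 * cE * (\<Sum>z\<in>R. (T (fst z+1, snd z) - T z)^2)" unfolding X1_def cE_def
      by (rule diff_bound[OF fR fE, where \<tau>="\<lambda>z. (fst z - 1, snd z)"]) (use Tsupp in auto)
    also have "(\<Sum>z\<in>R. (T (fst z+1, snd z) - T z)^2) = h1^2 * Q1"
      unfolding d1 Q1_def by (simp add: power_mult_distrib sum_distrib_left)
    finally have x1: "X1^2 \<le> 2 * cE * (h1^2 * Q1)" .
    have "X2^2 \<le> 2 * cE * (\<Sum>z\<in>R. (T (fst z, snd z+1) - T z)^2)" unfolding X2_def cE_def
      by (rule diff_bound[OF fR fE, where \<tau>="\<lambda>z. (fst z, snd z - 1)"]) (use Tsupp in auto)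
    also have "(\<Sum>z\<in>R. (T (fst z, snd z+1) - T z)^2) = h2^2 * Q2"
      unfolding d2 Q2_def by (simp add: power_mult_distrib sum_distrib_left)
    finally have x2: "X2^2 \<le> 2 * cE * (h2^2 * Q2)" .
    have Q1n: "Q1 \<ge> 0" and Q2n: "Q2 \<ge> 0" by (simp_all add: Q1_def Q2_def sum_nonneg)
    have cEn: "cE \<ge> 0" by (simp add: cE_def)
    have "(X1 * X2)^2 = X1^2 * X2^2" by (simp add: power_mult_distrib)
    also have "\<dots> \<le> (2 * cE * (h1^2 * Q1)) * (2 * cE * (h2^2 * Q2))"
      by (rule mult_mono[OF x1 x2]) (use Q1n cEn in auto)
    also have "\<dots> = (cE * h1 * h2)^2 * (4 * Q1 * Q2)" by (simp add: power2_eq_square algebra_simps)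
    also have "\<dots> \<le> (cE * h1 * h2)^2 * (Q1 + Q2)^2"
    proof (rule mult_left_mono)
      show "4 * Q1 * Q2 \<le> (Q1 + Q2)^2" using sum_squares_ge_zero[of "Q1 - Q2" 0]
        by (simp add: power2_eq_square algebra_simps)
    qed simp
    also have "\<dots> = (cE * ((Q1 + Q2) * (h1*h2)))^2" by (simp add: power2_eq_square algebra_simps)
    finally have "(X1 * X2)^2 \<le> (cE * ((Q1 + Q2) * (h1*h2)))^2" .
    then show ?thesis
      by (rule power2_le_imp_le) (use Q1n Q2n cEn h1 h2 in simp)
  qed
  finally have fin: "(c-b)^2 * real (card Ec) \<le> cE * ((Q1 + Q2) * (h1*h2))" .
  have Teq: "(\<lambda>z. clamp b c \<bar>u z\<bar>) = T" by (simp add: T_def fun_eq_iff)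
  have "(Q1 + Q2) * (h1*h2) = (\<Sum>z\<in>R. ((D1p h1 T z)^2 + (D2p h2 T z)^2) * (h1*h2))"
    by (simp add: Q1_def Q2_def sum_distrib_right sum.distrib distrib_right)
  then show ?thesis unfolding Teq using fin by (simp add: E_def Ec_def R_def cE_def)
qed




lemma level_bound:
  fixes u :: gridfun and w b :: real
  assumes su: "(\<lambda>z. (u z)^2 * w) summable_on UNIV" and w: "w > 0" and b: "b > 0"
  shows "finite {z. b < \<bar>u z\<bar>}"
    and "b^2 * real (card {z. b < \<bar>u z\<bar>}) * w \<le> (\<Sum>\<^sub>\<infinity>z. (u z)^2 * w)"
proof -
  define E where "E = {z. b < \<bar>u z\<bar>}"
  have key: "b^2 * real (card F) * w \<le> (\<Sum>\<^sub>\<infinity>z. (u z)^2 * w)" if F: "finite F" "F \<subseteq> E" for F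
  proof -
    have "b^2 * real (card F) * w = (\<Sum>z\<in>F. b^2 * w)" by simp
    also have "\<dots> \<le> (\<Sum>z\<in>F. (u z)^2 * w)"
    proof (rule sum_mono)
      fix z assume "z \<in> F"
      then have "b < \<bar>u z\<bar>" using F by (auto simp: E_def)
      then have "b^2 \<le> \<bar>u z\<bar>^2" using b by (intro power_mono) auto
      then show "b^2 * w \<le> (u z)^2 * w" using w by simp
    qed
    also have "\<dots> \<le> (\<Sum>\<^sub>\<infinity>z. (u z)^2 * w)"
      by (rule finite_sum_le_infsum[OF su F(1)]) (use w in auto)
    finally show ?thesis .
  qed
  show fE: "finite {z. b < \<bar>u z\<bar>}"
  proof (rule ccontr)
    assume "infinite {z. b < \<bar>u z\<bar>}"
    then have inf: "infinite E" by (simp add: E_def)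
    define M where "M = (\<Sum>\<^sub>\<infinity>z. (u z)^2 * w)"
    obtain n :: nat where n: "real n > M / (b^2 * w)" using reals_Archimedean2 by blast
    obtain F where F: "F \<subseteq> E" "finite F" "card F = n" using infinite_arbitrarily_large[OF inf] by blast
    have "b^2 * real n * w \<le> M" using key[OF F(2,1)] F(3) by (simp add: M_def)
    moreover have "M < real n * (b^2 * w)" using n b w by (simp add: field_simps)
    ultimately show False by (simp add: algebra_simps)
  qed
  show "b^2 * real (card {z. b < \<bar>u z\<bar>}) * w \<le> (\<Sum>\<^sub>\<infinity>z. (u z)^2 * w)"
    using key[of E] fE by (simp add: E_def)
qed

lemma sq_abs_diff: "(\<bar>x::real\<bar> - \<bar>y\<bar>)^2 \<le> (x - y)^2"
proof -
  have "\<bar>\<bar>x\<bar> - \<bar>y\<bar>\<bar> \<le> \<bar>x - y\<bar>" by (rule abs_triangle_ineq3)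
  then show ?thesis by (metis abs_ge_zero power2_abs power_mono)
qed

context
  fixes h1 h2 :: real and u :: gridfun
  assumes h1: "h1 > 0" and h2: "h2 > 0"
    and su: "(\<lambda>z. (u z)^2 * (h1*h2)) summable_on UNIV"
    and s1: "(\<lambda>z. (D1p h1 u z)^2 * (h1*h2)) summable_on UNIV"
    and s2: "(\<lambda>z. (D2p h2 u z)^2 * (h1*h2)) summable_on UNIV"
begin

definition gL :: "(int\<times>int) set \<Rightarrow> real \<Rightarrow> real \<Rightarrow> real" where
  "gL R b c = (\<Sum>z\<in>R. ((D1p h1 (\<lambda>z. clamp b c \<bar>u z\<bar>) z)^2
        + (D2p h2 (\<lambda>z. clamp b c \<bar>u z\<bar>) z)^2) * (h1*h2))"

definition PP :: real where
  "PP = (\<Sum>\<^sub>\<infinity>z. (D1p h1 u z)^2 * (h1*h2)) + (\<Sum>\<^sub>\<infinity>z. (D2p h2 u z)^2 * (h1*h2))"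

lemma PP_nonneg: "PP \<ge> 0"
  unfolding PP_def using h1 h2 by (intro add_nonneg_nonneg infsum_nonneg) auto

lemma gL_nonneg: "gL R b c \<ge> 0"
  unfolding gL_def using h1 h2 by (intro sum_nonneg) simp

lemma edge_D1:
  assumes "\<delta> \<ge> 0"
  shows "(\<Sum>j<n. (D1p h1 (\<lambda>z. clamp (b + real j * \<delta>) (b + real (Suc j) * \<delta>) \<bar>u z\<bar>) z)^2)
         \<le> (D1p h1 u z)^2"
proof -
  have "(\<Sum>j<n. (D1p h1 (\<lambda>z. clamp (b + real j * \<delta>) (b + real (Suc j) * \<delta>) \<bar>u z\<bar>) z)^2)
     = (\<Sum>j<n. (clamp (b + real j * \<delta>) (b + real (Suc j) * \<delta>) \<bar>u (fst z + 1, snd z)\<bar>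
              - clamp (b + real j * \<delta>) (b + real (Suc j) * \<delta>) \<bar>u z\<bar>)^2) / h1^2"
    by (simp add: D1p_def power_divide sum_divide_distrib)
  also have "\<dots> \<le> (\<bar>u (fst z + 1, snd z)\<bar> - \<bar>u z\<bar>)^2 / h1^2"
    by (rule divide_right_mono[OF layers_edge[OF assms]]) simp
  also have "\<dots> \<le> (u (fst z + 1, snd z) - u z)^2 / h1^2"
    by (rule divide_right_mono[OF sq_abs_diff]) simp
  also have "\<dots> = (D1p h1 u z)^2" by (simp add: D1p_def power_divide)
  finally show ?thesis .
qed

lemma edge_D2:
  assumes "\<delta> \<ge> 0"
  shows "(\<Sum>j<n. (D2p h2 (\<lambda>z. clamp (b + real j * \<delta>) (b + real (Suc j) * \<delta>) \<bar>u z\<bar>) z)^2)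
         \<le> (D2p h2 u z)^2"
proof -
  have "(\<Sum>j<n. (D2p h2 (\<lambda>z. clamp (b + real j * \<delta>) (b + real (Suc j) * \<delta>) \<bar>u z\<bar>) z)^2)
     = (\<Sum>j<n. (clamp (b + real j * \<delta>) (b + real (Suc j) * \<delta>) \<bar>u (fst z, snd z + 1)\<bar>
              - clamp (b + real j * \<delta>) (b + real (Suc j) * \<delta>) \<bar>u z\<bar>)^2) / h2^2"
    by (simp add: D2p_def power_divide sum_divide_distrib)
  also have "\<dots> \<le> (\<bar>u (fst z, snd z + 1)\<bar> - \<bar>u z\<bar>)^2 / h2^2"
    by (rule divide_right_mono[OF layers_edge[OF assms]]) simp
  also have "\<dots> \<le> (u (fst z, snd z + 1) - u z)^2 / h2^2"
    by (rule divide_right_mono[OF sq_abs_diff]) simp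
  also have "\<dots> = (D2p h2 u z)^2" by (simp add: D2p_def power_divide)
  finally show ?thesis .
qed

lemma layers_total:
  assumes "\<delta> \<ge> 0" and R: "finite R"
  shows "(\<Sum>j<n. gL R (b + real j * \<delta>) (b + real (Suc j) * \<delta>)) \<le> PP"
proof -
  have "(\<Sum>j<n. gL R (b + real j * \<delta>) (b + real (Suc j) * \<delta>))
     = (\<Sum>z\<in>R. ((\<Sum>j<n. (D1p h1 (\<lambda>z. clamp (b + real j * \<delta>) (b + real (Suc j) * \<delta>) \<bar>u z\<bar>) z)^2)
          + (\<Sum>j<n. (D2p h2 (\<lambda>z. clamp (b + real j * \<delta>) (b + real (Suc j) * \<delta>) \<bar>u z\<bar>) z)^2)) * (h1*h2))"
    unfolding gL_def by (subst sum.swap) (rule sum.cong[OF refl], simp add: sum.distrib sum_distrib_right distrib_right)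
  also have "\<dots> \<le> (\<Sum>z\<in>R. ((D1p h1 u z)^2 + (D2p h2 u z)^2) * (h1*h2))"
    by (intro sum_mono mult_right_mono add_mono edge_D1 edge_D2 assms) (use h1 h2 in simp)
  also have "\<dots> = (\<Sum>z\<in>R. (D1p h1 u z)^2 * (h1*h2)) + (\<Sum>z\<in>R. (D2p h2 u z)^2 * (h1*h2))"
    by (simp add: sum.distrib distrib_right)
  also have "\<dots> \<le> PP" unfolding PP_def
    by (intro add_mono finite_sum_le_infsum s1 s2 R) (use h1 h2 in auto)
  finally show ?thesis .
qed

lemma chain:
  assumes b: "b > 0" and d: "\<delta> \<ge> 0"
    and sub: "{z. b < \<bar>u z\<bar>} \<subseteq> {a0..<a1}\<times>{b0..<b1}"
  shows "\<delta>^(2*n) * real (card {z. b + real n * \<delta> < \<bar>u z\<bar>}) \<le>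
     real (card {z. b < \<bar>u z\<bar>}) * (\<Prod>j<n. gL ({a0..<a1}\<times>{b0..<b1}) (b + real j * \<delta>) (b + real (Suc j) * \<delta>))"
proof (induction n)
  case 0 then show ?case by simp
next
  case (Suc n)
  define R where "R = {a0..<a1}\<times>{b0..<b1}"
  define c where "c = b + real n * \<delta>"
  have nd: "0 \<le> real n * \<delta>" using d by simp
  have c: "c > 0" "c \<ge> b" using b nd by (simp_all add: c_def)
  have w: "h1 * h2 > 0" using h1 h2 by simp
  have subc: "{z. c < \<bar>u z\<bar>} \<subseteq> {z. b < \<bar>u z\<bar>}" using c by auto
  have fin: "finite {z. c < \<bar>u z\<bar>}" by (rule level_bound(1)[OF su w c(1)])
  have lay: "(b + real (Suc n) * \<delta> - c)^2 * real (card {z. b + real (Suc n) * \<delta> < \<bar>u z\<bar>})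
     \<le> real (card {z. c < \<bar>u z\<bar>}) * gL R c (b + real (Suc n) * \<delta>)"
    unfolding gL_def R_def
    by (rule layer[OF h1 h2 c(1) _ fin]) (use subc sub d in \<open>auto simp: c_def algebra_simps\<close>)
  have e: "b + real (Suc n) * \<delta> - c = \<delta>" by (simp add: c_def algebra_simps)
  have "\<delta>^(2*Suc n) * real (card {z. b + real (Suc n) * \<delta> < \<bar>u z\<bar>})
      = \<delta>^(2*n) * ((b + real (Suc n) * \<delta> - c)^2 * real (card {z. b + real (Suc n) * \<delta> < \<bar>u z\<bar>}))"
    unfolding e by (simp add: power_add power_mult mult.assoc power2_eq_square)
  also have "\<dots> \<le> \<delta>^(2*n) * (real (card {z. c < \<bar>u z\<bar>}) * gL R c (b + real (Suc n) * \<delta>))"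
    by (rule mult_left_mono[OF lay]) simp
  also have "\<dots> = (\<delta>^(2*n) * real (card {z. c < \<bar>u z\<bar>})) * gL R c (b + real (Suc n) * \<delta>)"
    by simp
  also have "\<dots> \<le> (real (card {z. b < \<bar>u z\<bar>}) * (\<Prod>j<n. gL R (b + real j * \<delta>) (b + real (Suc j) * \<delta>)))
                 * gL R c (b + real (Suc n) * \<delta>)"
    by (rule mult_right_mono) (use Suc.IH gL_nonneg in \<open>simp_all add: c_def R_def\<close>)
  also have "\<dots> = real (card {z. b < \<bar>u z\<bar>}) * (\<Prod>j<Suc n. gL R (b + real j * \<delta>) (b + real (Suc j) * \<delta>))"
    by (simp add: c_def)
  finally show ?case by (simp add: R_def)
qed

lemma tail:
  assumes b: "b > 0" and d: "\<delta> \<ge> 0" and n: "n \<ge> 1"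
  shows "\<delta>^(2*n) * real (card {z. b + real n * \<delta> < \<bar>u z\<bar>}) \<le>
     real (card {z. b < \<bar>u z\<bar>}) * (PP / real n)^n"
proof -
  have w: "h1 * h2 > 0" using h1 h2 by simp
  have fin: "finite {z. b < \<bar>u z\<bar>}" by (rule level_bound(1)[OF su w b])
  obtain a0 a1 b0 b1 where sub: "{z. b < \<bar>u z\<bar>} \<subseteq> {a0..<a1}\<times>{b0..<b1}"
  proof -
    obtain A where "\<forall>z\<in>{z. b < \<bar>u z\<bar>}. \<bar>fst z\<bar> \<le> A \<and> \<bar>snd z\<bar> \<le> A"
    proof -
      define I where "I = insert 0 ((\<lambda>z. max \<bar>fst z\<bar> \<bar>snd z\<bar>) ` {z. b < \<bar>u z\<bar>})"
      have fI: "finite I" using fin by (simp add: I_def)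
      have "\<forall>x\<in>(\<lambda>z. max \<bar>fst z\<bar> \<bar>snd z\<bar>) ` {z. b < \<bar>u z\<bar>}. x \<le> Max I"
        using Max_ge[OF fI] by (auto simp: I_def)
      then show ?thesis using that by auto
    qed
    then have "{z. b < \<bar>u z\<bar>} \<subseteq> {-A..<A+1}\<times>{-A..<A+1}" by fastforce
    then show ?thesis using that by blast
  qed
  define R where "R = {a0..<a1}\<times>{b0..<b1}"
  define g where "g j = gL R (b + real j * \<delta>) (b + real (Suc j) * \<delta>)" for j
  have gn: "\<And>j. g j \<ge> 0" by (simp add: g_def gL_nonneg)
  have "(\<Prod>j<n. g j) powr (1 / real n) \<le> (\<Sum>j<n. g j / real n)"
  proof -
    have "0 \<in> {..<n}" using n by auto
    then have "{..<n} \<noteq> {}" by blast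
    then show ?thesis using arith_geom_mean[of "{..<n}" g] gn by simp
  qed
  also have "\<dots> = (\<Sum>j<n. g j) / real n" by (simp add: sum_divide_distrib)
  also have "\<dots> \<le> PP / real n"
    by (rule divide_right_mono) (use layers_total[OF d, where R=R and n=n and b=b] in \<open>simp_all add: g_def R_def\<close>)
  finally have am: "(\<Prod>j<n. g j) powr (1 / real n) \<le> PP / real n" .
  have pn: "(\<Prod>j<n. g j) \<ge> 0" using gn by (simp add: prod_nonneg)
  have "(\<Prod>j<n. g j) = ((\<Prod>j<n. g j) powr (1 / real n))^n"
  proof (cases "(\<Prod>j<n. g j) = 0")
    case True then show ?thesis using n by (simp del: prod_zero_iff)
  next
    case False
    then have pp: "(\<Prod>j<n. g j) > 0" using pn by (simp del: prod_zero_iff)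
    have "((\<Prod>j<n. g j) powr (1 / real n))^n = ((\<Prod>j<n. g j) powr (1 / real n)) powr real n"
    proof -
      have "0 < (\<Prod>j<n. g j) powr (1 / real n)" using pp by (simp del: prod_zero_iff)
      then show ?thesis by (simp add: powr_realpow)
    qed
    also have "\<dots> = (\<Prod>j<n. g j)" using n pp by (simp add: powr_powr)
    finally show ?thesis by simp
  qed
  also have "\<dots> \<le> (PP / real n)^n"
    by (rule power_mono[OF am]) simp
  finally have prodb: "(\<Prod>j<n. g j) \<le> (PP / real n)^n" .
  have "\<delta>^(2*n) * real (card {z. b + real n * \<delta> < \<bar>u z\<bar>}) \<le> real (card {z. b < \<bar>u z\<bar>}) * (\<Prod>j<n. g j)"
    using chain[OF b d sub, of n] by (simp add: g_def R_def)
  also have "\<dots> \<le> real (card {z. b < \<bar>u z\<bar>}) * (PP / real n)^n"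
    by (rule mult_left_mono[OF prodb]) simp
  finally show ?thesis .
qed

end




lemma CS2_ge: "C_S2 \<ge> 100"
proof -
  have "2 * 2 * (0 + 256) \<le> 2 * pi * (exp 1 + 256)"
    using pi_ge_two by (intro mult_mono) auto
  then have a: "156.25 \<le> 2 * pi * (exp 1 + 256)" by simp
  have b: "sqrt 156.25 \<le> sqrt (2 * pi * (exp 1 + 256))" using a by (rule real_sqrt_le_mono)
  have eq: "sqrt 156.25 = (12.5::real)" by (rule real_sqrt_unique) (simp_all add: power2_eq_square)
  have "12.5 \<le> sqrt (2 * pi * (exp 1 + 256))" using b unfolding eq .
  then show ?thesis unfolding C_S2_def by linarith
qed

lemma A_le: "A_exp (x::real) \<le> x^2 * exp (x^2)"
proof -
  have "1 + (- (x^2)) \<le> exp (- (x^2))" by (rule exp_ge_add_one_self)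
  then have "(1 - x^2) * exp (x^2) \<le> exp (- (x^2)) * exp (x^2)" by (intro mult_right_mono) auto
  also have "\<dots> = 1" by (simp add: exp_minus field_simps)
  finally show ?thesis by (simp add: A_exp_def algebra_simps)
qed

lemma A_nonneg: "A_exp x \<ge> 0" by (simp add: A_exp_def)

lemma stair:
  fixes L :: "nat \<Rightarrow> real" and f :: "real \<Rightarrow> real"
  assumes mono: "\<And>x y. x \<le> y \<Longrightarrow> f x \<le> f y" and nn: "\<And>x. f x \<ge> 0"
  shows "L 0 < s \<Longrightarrow> s \<le> L M \<Longrightarrow> f s \<le> (\<Sum>j<M. if L j < s then f (L (Suc j)) else 0)"
proof (induction M)
  case 0 then show ?case by simp
next
  case (Suc M)
  have nns: "0 \<le> (\<Sum>j<M. if L j < s then f (L (Suc j)) else 0)" by (intro sum_nonneg) (simp add: nn)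
  show ?case
  proof (cases "s \<le> L M")
    case True
    then have "f s \<le> (\<Sum>j<M. if L j < s then f (L (Suc j)) else 0)" using Suc by simp
    moreover have "0 \<le> (if L M < s then f (L (Suc M)) else 0)" by (simp add: nn)
    ultimately show ?thesis by simp
  next
    case False
    then have "f s \<le> (if L M < s then f (L (Suc M)) else 0)" using mono Suc.prems by simp
    then show ?thesis using nns by simp
  qed
qed

lemma w_bound:
  fixes j :: nat and C :: real
  assumes "C \<ge> 100"
  shows "exp (16 * (real j + 2)^2 / C^2) \<le> 2 * 2^(j^2)"
proof -
  have C2: "C^2 \<ge> 10000" using power_mono[OF assms, of 2] by simp
  have sq: "2 * real j \<le> 1 + real j * real j"
    using sum_squares_ge_zero[of "real j - 1" 0] by (simp add: power2_eq_square algebra_simps)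
  have e1: "16 * (real j + 2)^2 = 16*(real j * real j) + 64 * real j + 64"
    by (simp add: power2_eq_square algebra_simps)
  have e2: "10000 * ((1 + real j^2) / 2) = 5000 + 5000 * (real j * real j)"
    by (simp add: power2_eq_square)
  have "16 * (real j + 2)^2 \<le> 10000 * ((1 + real j^2) / 2)"
    unfolding e1 e2 using sq mult_nonneg_nonneg[of "real j" "real j"] by linarith
  also have "\<dots> \<le> C^2 * ((1 + real j^2) / 2)" using C2 by (intro mult_right_mono) auto
  finally have "16 * (real j + 2)^2 / C^2 \<le> (1 + real j^2) / 2"
    using C2 by (simp add: divide_le_eq mult.commute)
  then have "exp (16 * (real j + 2)^2 / C^2) \<le> exp ((1 + real j^2) / 2)" by simp
  also have "\<dots> = exp (1/2) ^ (1 + j^2)"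
    by (subst exp_of_nat_mult[symmetric]) (simp add: field_simps)
  also have "\<dots> \<le> 2 ^ (1 + j^2)"
  proof (rule power_mono)
    have "exp (1/2::real) ^ 2 = exp 1" by (simp add: exp_of_nat_mult[symmetric])
    also have "\<dots> \<le> 2^2" using exp_le by simp
    finally show "exp (1/2::real) \<le> 2" by (rule power2_le_imp_le) simp
  qed simp
  finally show ?thesis by simp
qed




context
  fixes h1 h2 :: real and u :: gridfun
  assumes h1: "h1 > 0" and h2: "h2 > 0"
    and su: "(\<lambda>z. (u z)^2 * (h1*h2)) summable_on UNIV"
    and s1: "(\<lambda>z. (D1p h1 u z)^2 * (h1*h2)) summable_on UNIV"
    and s2: "(\<lambda>z. (D2p h2 u z)^2 * (h1*h2)) summable_on UNIV"
begin

lemma PP_nonneg': "PP h1 h2 u \<ge> 0" by (rule PP_nonneg[OF h1 h2 su s1 s2])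

lemma levels:
  assumes N: "N > 0" and PN: "PP h1 h2 u \<le> N^2"
  shows "16^(j^2) * real (card {z. 4*N*(real j + 1) < \<bar>u z\<bar>}) \<le> real (card {z. 4*N < \<bar>u z\<bar>})"
proof (cases "j = 0")
  case True then show ?thesis by simp
next
  case False
  then have j: "real j > 0" by simp
  define n where "n = j^2"
  have n1: "n \<ge> 1" using False by (simp add: n_def)
  have t: "(4*N/real j)^(2*n) * real (card {z. 4*N + real n * (4*N/real j) < \<bar>u z\<bar>})
      \<le> real (card {z. 4*N < \<bar>u z\<bar>}) * (PP h1 h2 u / real n)^n"
    by (rule tail[OF h1 h2 su s1 s2]) (use N n1 in auto)
  have e1: "4*N + real n * (4*N/real j) = 4*N*(real j + 1)"
    using j by (simp add: n_def power2_eq_square field_simps)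
  define q where "q = (N^2 / real n)"
  have q: "q > 0" using N n1 by (simp add: q_def)
  have e2: "(4*N/real j)^(2*n) = 16^n * q^n"
  proof -
    have "(4*N/real j)^(2*n) = ((4*N/real j)^2)^n" by (simp add: power_mult)
    also have "(4*N/real j)^2 = 16 * q" using j by (simp add: q_def n_def power_divide field_simps)
    finally show ?thesis by (simp add: power_mult_distrib)
  qed
  have "(PP h1 h2 u / real n)^n \<le> q^n" unfolding q_def
    by (rule power_mono) (use PN n1 PP_nonneg' in \<open>auto intro: divide_right_mono\<close>)
  then have "16^n * q^n * real (card {z. 4*N*(real j + 1) < \<bar>u z\<bar>}) \<le> real (card {z. 4*N < \<bar>u z\<bar>}) * q^n"
    using t unfolding e1 e2 by (meson mult_left_mono of_nat_0_le_iff order_trans)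
  then have "q^n * (16^n * real (card {z. 4*N*(real j + 1) < \<bar>u z\<bar>})) \<le> q^n * real (card {z. 4*N < \<bar>u z\<bar>})"
    by (simp add: algebra_simps)
  then show ?thesis using q by (simp add: n_def)
qed

end




lemma exp_half_le: "exp (1/2::real) \<le> 2"
proof -
  have "exp (1/2::real) ^ 2 = exp 1" by (simp add: exp_of_nat_mult[symmetric])
  also have "\<dots> \<le> 2^2" using exp_le by simp
  finally show "exp (1/2::real) \<le> 2" by (rule power2_le_imp_le) simp
qed

context
  fixes h1 h2 :: real and u :: gridfun
  assumes h1: "h1 > 0" and h2: "h2 > 0"
    and su: "(\<lambda>z. (u z)^2 * (h1*h2)) summable_on UNIV"
    and s1: "(\<lambda>z. (D1p h1 u z)^2 * (h1*h2)) summable_on UNIV"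
    and s2: "(\<lambda>z. (D2p h2 u z)^2 * (h1*h2)) summable_on UNIV"
begin

lemma main_orlicz:
  assumes Upos: "(\<Sum>\<^sub>\<infinity>z. (u z)^2 * (h1*h2)) > 0"
  shows "(\<lambda>z. A_exp (\<bar>u z\<bar> / (C_S2 * sqrt ((\<Sum>\<^sub>\<infinity>z. (u z)^2 * (h1*h2)) + PP h1 h2 u))) * (h1*h2)) summable_on UNIV
    \<and> (\<Sum>\<^sub>\<infinity>z. A_exp (\<bar>u z\<bar> / (C_S2 * sqrt ((\<Sum>\<^sub>\<infinity>z. (u z)^2 * (h1*h2)) + PP h1 h2 u))) * (h1*h2)) \<le> 1"
proof -
  define U where "U = (\<Sum>\<^sub>\<infinity>z. (u z)^2 * (h1*h2))"
  define P where "P = PP h1 h2 u"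
  define N where "N = sqrt (U + P)"
  define C where "C = C_S2"
  define k where "k = C * N"
  define hh where "hh = h1 * h2"
  have hh: "hh > 0" using h1 h2 by (simp add: hh_def)
  have C: "C \<ge> 100" using CS2_ge by (simp add: C_def)
  have P0: "P \<ge> 0" using PP_nonneg[OF h1 h2 su s1 s2] by (simp add: P_def)
  have U0: "U > 0" using Upos by (simp add: U_def)
  have N2: "N^2 = U + P" using P0 U0 by (simp add: N_def)
  have N: "N > 0" using P0 U0 by (simp add: N_def)
  have UN: "U \<le> N^2" and PN: "P \<le> N^2" using N2 P0 U0 by auto
  have k: "k > 0" using N C by (simp add: k_def)
  have k2: "k^2 = C^2 * N^2" by (simp add: k_def power_mult_distrib)
  have C2: "C^2 \<ge> 10000" using power_mono[OF C, of 2] by simp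
  define E where "E = {z. 4*N < \<bar>u z\<bar>}"
  have su': "(\<lambda>z. (u z)^2 * hh) summable_on UNIV" using su by (simp add: hh_def)
  have fE: "finite E" unfolding E_def by (rule level_bound(1)[OF su' hh]) (use N in simp)
  have cheb: "(4*N)^2 * real (card E) * hh \<le> U" unfolding E_def U_def hh_def
    by (rule level_bound(2)[OF su]) (use N h1 h2 in simp_all)
  have cEh: "real (card E) * hh \<le> 1/16"
  proof -
    have "16 * N^2 * (real (card E) * hh) \<le> N^2 * 1" using cheb UN by (simp add: power_mult_distrib mult.assoc)
    then have "16 * (real (card E) * hh) \<le> 1" using N by (simp add: mult.assoc mult.left_commute[of "N^2"])
    then show ?thesis by simp
  qed
  have ub: "(u z)^2 * hh \<le> U" for z
  proof -
    have "sum (\<lambda>z. (u z)^2 * hh) {z} \<le> U" unfolding U_def hh_def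
      by (rule finite_sum_le_infsum[OF su]) (use h1 h2 in auto)
    then show ?thesis by simp
  qed
  define B where "B = sqrt (U / hh)"
  have uB: "\<bar>u z\<bar> \<le> B" for z
  proof -
    have "(u z)^2 \<le> U / hh" using ub[of z] hh by (simp add: le_divide_eq)
    then have "sqrt ((u z)^2) \<le> B" unfolding B_def by (rule real_sqrt_le_mono)
    then show ?thesis by simp
  qed
  define f where "f z = A_exp (\<bar>u z\<bar> / k) * hh" for z
  have fnn: "f z \<ge> 0" for z using hh by (simp add: f_def A_nonneg)
  have fA: "f z \<le> ((u z)^2 / k^2) * exp ((u z)^2 / k^2) * hh" for z
  proof -
    have "A_exp (\<bar>u z\<bar> / k) \<le> (\<bar>u z\<bar> / k)^2 * exp ((\<bar>u z\<bar> / k)^2)" by (rule A_le)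
    then have "A_exp (\<bar>u z\<bar> / k) * hh \<le> (\<bar>u z\<bar> / k)^2 * exp ((\<bar>u z\<bar> / k)^2) * hh"
      using hh by (intro mult_right_mono) auto
    then show ?thesis by (simp add: f_def power_divide)
  qed
  have fbound: "f z \<le> (u z)^2 * hh * (exp (B^2/k^2) / k^2)" for z
  proof -
    have "(u z)^2 \<le> B^2" using uB[of z] by (metis abs_ge_zero power2_abs power_mono)
    then have "exp ((u z)^2 / k^2) \<le> exp (B^2/k^2)" using k by (simp add: divide_right_mono)
    then have "((u z)^2 / k^2) * exp ((u z)^2 / k^2) * hh \<le> ((u z)^2 / k^2) * exp (B^2/k^2) * hh"
      using hh k by (intro mult_right_mono mult_left_mono) auto
    then show ?thesis using fA[of z] by (simp add: field_simps)
  qed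
  have summ: "f summable_on UNIV"
    by (rule summable_on_comparison_test[OF summable_on_cmult_left[OF su', of "exp (B^2/k^2) / k^2"]])
       (use fbound fnn in blast)+
  have split: "infsum f UNIV = infsum f E + infsum f (-E)"
  proof -
    have "infsum f (E \<union> -E) = infsum f E + infsum f (-E)"
      by (rule infsum_Un_disjoint) (use summable_on_subset[OF summ] in auto)
    then show ?thesis by simp
  qed
  have small: "infsum f (-E) \<le> 1/5000"
  proof -
    have pt: "f z \<le> (u z)^2 * hh * (2 / k^2)" if "z \<in> -E" for z
    proof -
      have "\<bar>u z\<bar> \<le> 4*N" using that by (simp add: E_def)
      then have "(u z)^2 \<le> (4*N)^2" by (metis abs_ge_zero power2_abs power_mono)
      then have "(u z)^2 / k^2 \<le> (4*N)^2 / k^2" by (rule divide_right_mono) simp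
      also have "(4*N)^2 / k^2 = 16 / C^2" using N unfolding k2 by (simp add: power_mult_distrib)
      also have "\<dots> \<le> 1/2" using C2 by (simp add: divide_le_eq)
      finally have "exp ((u z)^2 / k^2) \<le> exp (1/2)" by simp
      then have "exp ((u z)^2 / k^2) \<le> 2" using exp_half_le by linarith
      then have "((u z)^2 / k^2) * exp ((u z)^2 / k^2) * hh \<le> ((u z)^2 / k^2) * 2 * hh"
        using hh k by (intro mult_right_mono mult_left_mono) auto
      then show ?thesis using fA[of z] by (simp add: field_simps)
    qed
    have "infsum f (-E) \<le> infsum (\<lambda>z. (u z)^2 * hh * (2 / k^2)) (-E)"
      by (rule infsum_mono[OF summable_on_subset[OF summ] summable_on_cmult_left[OF summable_on_subset[OF su']]])
         (use pt in auto)
    also have "\<dots> = infsum (\<lambda>z. (u z)^2 * hh) (-E) * (2 / k^2)" by (rule infsum_cmult_left') 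
    also have "\<dots> \<le> U * (2 / k^2)"
    proof (rule mult_right_mono)
      show "infsum (\<lambda>z. (u z)^2 * hh) (-E) \<le> U" unfolding U_def hh_def
        by (rule infsum_mono2[OF summable_on_subset[OF su] su]) (use h1 h2 in auto)
    qed (use k in simp)
    also have "\<dots> \<le> N^2 * (2 / (C^2 * N^2))" unfolding k2[symmetric] using UN k by (intro mult_right_mono) auto
    also have "\<dots> = 2 / C^2" using N by simp
    also have "\<dots> \<le> 1/5000" using C2 by (simp add: divide_le_eq)
    finally show ?thesis .
  qed
  have large: "infsum f E \<le> 1/7"
  proof -
    define M where "M = nat \<lceil>B / (4*N)\<rceil>"
    define L where "L j = 4*N*(real j + 1)" for j
    define g where "g s = exp ((max s 0)^2 / k^2)" for s
    have gmono: "g x \<le> g y" if "x \<le> y" for x y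
    proof -
      have "(max x 0)^2 \<le> (max y 0)^2" using that by (intro power_mono) auto
      then show ?thesis using k by (simp add: g_def divide_right_mono)
    qed
    have gnn: "g x \<ge> 0" for x by (simp add: g_def)
    have LM: "B \<le> L M"
    proof -
      have "B / (4*N) \<le> real M" unfolding M_def by (rule real_nat_ceiling_ge)
      then have "B \<le> 4*N * real M" using N by (simp add: divide_le_eq mult.commute)
      then show ?thesis using N by (simp add: L_def algebra_simps)
    qed
    have "infsum f E = sum f E" using fE by simp
    also have "\<dots> \<le> (\<Sum>z\<in>E. (\<Sum>j<M. if L j < \<bar>u z\<bar> then g (L (Suc j)) else 0) * hh)"
    proof (rule sum_mono)
      fix z assume z: "z \<in> E"
      have "f z \<le> g \<bar>u z\<bar> * hh"
      proof -
        have "A_exp (\<bar>u z\<bar> / k) \<le> exp ((\<bar>u z\<bar> / k)^2)" by (simp add: A_exp_def)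
        also have "\<dots> = g \<bar>u z\<bar>" by (simp add: g_def power_divide)
        finally show ?thesis using hh by (simp add: f_def)
      qed
      also have "g \<bar>u z\<bar> \<le> (\<Sum>j<M. if L j < \<bar>u z\<bar> then g (L (Suc j)) else 0)"
        by (rule stair[where f=g and L=L, OF gmono gnn]) (use z uB[of z] LM in \<open>auto simp: E_def L_def\<close>)
      then have "g \<bar>u z\<bar> * hh \<le> (\<Sum>j<M. if L j < \<bar>u z\<bar> then g (L (Suc j)) else 0) * hh"
        using hh by (intro mult_right_mono) auto
      finally show "f z \<le> (\<Sum>j<M. if L j < \<bar>u z\<bar> then g (L (Suc j)) else 0) * hh" .
    qed
    also have "\<dots> = hh * (\<Sum>j<M. \<Sum>z\<in>E. if L j < \<bar>u z\<bar> then g (L (Suc j)) else 0)"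
      by (subst sum.swap) (simp add: sum_distrib_left sum_distrib_right mult.commute)
    also have "\<dots> = hh * (\<Sum>j<M. g (L (Suc j)) * real (card {z. L j < \<bar>u z\<bar>}))"
    proof -
      have "(\<Sum>z\<in>E. if L j < \<bar>u z\<bar> then g (L (Suc j)) else 0) = g (L (Suc j)) * real (card {z. L j < \<bar>u z\<bar>})" for j
      proof -
        have "(\<Sum>z\<in>E. if L j < \<bar>u z\<bar> then g (L (Suc j)) else 0) = (\<Sum>z\<in>{z\<in>E. L j < \<bar>u z\<bar>}. g (L (Suc j)))"
          by (rule sum.inter_filter[symmetric, OF fE])
        also have "{z\<in>E. L j < \<bar>u z\<bar>} = {z. L j < \<bar>u z\<bar>}"
        proof -
          have "4*N \<le> L j" using N by (simp add: L_def)
          then show ?thesis by (auto simp: E_def)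
        qed
        finally show ?thesis by simp
      qed
      then show ?thesis by simp
    qed
    also have "\<dots> \<le> hh * (\<Sum>j<M. 2 * real (card E) * (1/8)^j)"
    proof (rule mult_left_mono[OF sum_mono])
      fix j assume "j \<in> {..<M}"
      have lv: "16^(j^2) * real (card {z. L j < \<bar>u z\<bar>}) \<le> real (card E)"
        unfolding L_def E_def by (rule levels[OF h1 h2 su s1 s2 N]) (use PN in \<open>simp add: P_def\<close>)
      have gL: "g (L (Suc j)) \<le> 2 * 2^(j^2)"
      proof -
        have "g (L (Suc j)) = exp (16 * (real j + 2)^2 / C^2)"
        proof -
          have "(max (L (Suc j)) 0)^2 / k^2 = (4*N*(real j + 2))^2 / (C^2 * N^2)"
            using N by (simp add: L_def k2 algebra_simps)
          also have "\<dots> = 16 * (real j + 2)^2 / C^2" using N by (simp add: power_mult_distrib)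
          finally show ?thesis by (simp add: g_def)
        qed
        also have "\<dots> \<le> 2 * 2^(j^2)" by (rule w_bound[OF C])
        finally show ?thesis .
      qed
      have "g (L (Suc j)) * real (card {z. L j < \<bar>u z\<bar>}) * 16^(j^2)
            \<le> (2 * 2^(j^2)) * (16^(j^2) * real (card {z. L j < \<bar>u z\<bar>}))"
      proof -
        have "g (L (Suc j)) * (real (card {z. L j < \<bar>u z\<bar>}) * 16^(j^2)) \<le> (2 * 2^(j^2)) * (real (card {z. L j < \<bar>u z\<bar>}) * 16^(j^2))"
          by (rule mult_right_mono[OF gL]) simp
        then show ?thesis by (simp add: mult.commute mult.left_commute mult.assoc)
      qed
      also have "\<dots> \<le> (2 * 2^(j^2)) * real (card E)" by (rule mult_left_mono[OF lv]) simp
      finally have a: "g (L (Suc j)) * real (card {z. L j < \<bar>u z\<bar>}) * 16^(j^2) \<le> 2 * 2^(j^2) * real (card E)" .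
      have "g (L (Suc j)) * real (card {z. L j < \<bar>u z\<bar>}) \<le> 2 * real (card E) * (2^(j^2) / 16^(j^2))"
        using a by (simp add: field_simps)
      also have "(2::real)^(j^2) / 16^(j^2) = (1/8)^(j^2)" by (simp add: power_divide[symmetric])
      also have "(1/8::real)^(j^2) \<le> (1/8)^j"
        by (rule power_decreasing) (simp_all add: power2_eq_square)
      finally show "g (L (Suc j)) * real (card {z. L j < \<bar>u z\<bar>}) \<le> 2 * real (card E) * (1/8)^j"
        by (simp add: mult_left_mono)
    qed (use hh in simp)
    also have "\<dots> = 2 * (real (card E) * hh) * (\<Sum>j<M. (1/8::real)^j)"
      by (simp add: sum_distrib_left[symmetric] mult.commute mult.left_commute)
    also have "\<dots> \<le> 2 * (1/16) * (8/7)"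
    proof (rule mult_mono)
      have "(\<Sum>j<M. (1/8::real)^j) < 1 / (1 - 1/8)" by (rule geometric_sum_less) auto
      then show "(\<Sum>j<M. (1/8::real)^j) \<le> 8/7" by simp
    qed (use cEh hh in \<open>auto simp: sum_nonneg\<close>)
    finally show ?thesis by simp
  qed
  have tot: "infsum f UNIV \<le> 1" using split small large by simp
  have feq: "f = (\<lambda>z. A_exp (\<bar>u z\<bar> / (C_S2 * sqrt ((\<Sum>\<^sub>\<infinity>z. (u z)^2 * (h1*h2)) + PP h1 h2 u))) * (h1*h2))"
    by (simp add: fun_eq_iff f_def k_def C_def N_def U_def P_def hh_def)
  show ?thesis using summ tot unfolding feq by simp
qed

end




lemma powr_A:
  fixes y p :: real
  assumes p: "p \<ge> 2" and y: "y \<ge> 0"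
  shows "(y / (2*p)) powr p \<le> A_exp y"
proof -
  have yA: "y^2 \<le> A_exp y" using exp_ge_add_one_self[of "y^2"] unfolding A_exp_def by linarith
  have base: "y / (2*p) \<le> y"
  proof -
    have "y * 1 \<le> y * (2*p)" using p y by (intro mult_left_mono) auto
    then show ?thesis using p by (simp add: divide_le_eq)
  qed
  have bnn: "0 \<le> y / (2*p)" using p y by simp
  consider "y \<le> 1" | "1 < y" "y \<le> 2*p" | "2*p < y" by linarith
  then show ?thesis
  proof cases
    case 1
    have "(y / (2*p)) powr p \<le> y powr p" by (rule powr_mono2) (use p bnn base in auto)
    also have "\<dots> \<le> y powr 2" by (rule powr_mono') (use p y 1 in auto)
    also have "\<dots> = y^2" using y by simp
    finally show ?thesis using yA by simp
  next
    case 2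
    have "(y / (2*p)) powr p \<le> 1" by (rule powr_le1) (use p y 2 in \<open>auto simp: divide_le_eq\<close>)
    also have "1 \<le> A_exp y"
    proof -
      have "1 * 1 \<le> y * y" using 2 by (intro mult_mono) auto
      then have "1 \<le> y^2" by (simp add: power2_eq_square)
      then have "1 + 1 \<le> exp (y^2)" using exp_ge_add_one_self[of "y^2"] by linarith
      then show ?thesis by (simp add: A_exp_def)
    qed
    finally show ?thesis .
  next
    case 3
    then have ypos: "y > 0" using p by simp
    have "(y / (2*p)) powr p \<le> y powr p" by (rule powr_mono2) (use p bnn base in auto)
    also have "\<dots> = exp (p * ln y)" using ypos by (simp add: powr_def)
    also have "\<dots> \<le> exp (y^2 / 2)"
    proof -
      have l0: "0 \<le> ln y" using 3 p by simp
      have l1: "ln y \<le> y" using ln_le_minus_one[OF ypos] by simp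
      have "p * ln y \<le> (y/2) * ln y" using 3 l0 by (intro mult_right_mono) auto
      also have "\<dots> \<le> (y/2) * y" using l1 ypos by (intro mult_left_mono) auto
      finally show ?thesis by (simp add: power2_eq_square)
    qed
    also have "\<dots> \<le> A_exp y"
    proof -
      define t where "t = exp (y^2 / 2)"
      have "1 + 1 \<le> t" unfolding t_def
      proof -
        have "4 * 4 \<le> y * y" using 3 p by (intro mult_mono) auto
        then have "1 \<le> y^2 / 2" by (simp add: power2_eq_square)
        then show "1 + 1 \<le> exp (y^2 / 2)" using exp_ge_add_one_self[of "y^2/2"] by linarith
      qed
      then have "2 * t \<le> t * t" by (intro mult_right_mono) auto
      with \<open>1 + 1 \<le> t\<close> have "t \<le> t * t - 1" by linarith
      moreover have "t * t = exp (y^2)" by (simp add: t_def exp_add[symmetric])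
      ultimately show ?thesis by (simp add: A_exp_def t_def)
    qed
    finally show ?thesis .
  qed
qed

lemma W12_eq:
  assumes h1: "h1 > 0" and h2: "h2 > 0"
    and su: "(\<lambda>z. (u z)^2 * (h1*h2)) summable_on UNIV"
    and s1: "(\<lambda>z. (D1p h1 u z)^2 * (h1*h2)) summable_on UNIV"
    and s2: "(\<lambda>z. (D2p h2 u z)^2 * (h1*h2)) summable_on UNIV"
  shows "W12_norm h1 h2 u = sqrt ((\<Sum>\<^sub>\<infinity>z. (u z)^2 * (h1*h2)) + PP h1 h2 u)"
  by (simp add: W12_norm_def PP_def[OF h1 h2 su s1 s2] add.assoc)

theorem mainTheorem7:
  fixes h1 h2 :: real
  assumes "h1 > 0" and "h2 > 0"
  shows "(\<forall>u. in_W12 h1 h2 u \<longrightarrow>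
            orlicz_norm A_exp h1 h2 u \<le> C_S2 * W12_norm h1 h2 u)
       \<and> (\<forall>u. in_W12 h1 h2 u \<and> u \<noteq> (\<lambda>_. 0) \<longrightarrow>
            (\<lambda>z. A_exp (\<bar>u z\<bar> / (C_S2 * W12_norm h1 h2 u)) * (h1 * h2)) summable_on UNIV \<and>
            (\<Sum>\<^sub>\<infinity>z. A_exp (\<bar>u z\<bar> / (C_S2 * W12_norm h1 h2 u)) * (h1 * h2)) \<le> 1)
       \<and> (\<forall>u p. in_W12 h1 h2 u \<and> p \<ge> 2 \<longrightarrow>
            (\<lambda>z. \<bar>u z\<bar> powr p * (h1 * h2)) summable_on UNIV \<and>
            Lp_norm p h1 h2 u \<le> 2 * C_S2 * p * W12_norm h1 h2 u)"
proof -
  have h1: "h1 > 0" and h2: "h2 > 0" using assms by auto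
  have hh: "h1 * h2 > 0" using h1 h2 by simp
  have C: "C_S2 \<ge> 100" by (rule CS2_ge)
  have W0: "W12_norm h1 h2 (\<lambda>_. 0) = 0" by (simp add: W12_norm_def D1p_def D2p_def)
  have Upos: "(\<Sum>\<^sub>\<infinity>z. (u z)^2 * (h1*h2)) > 0"
    if su: "(\<lambda>z. (u z)^2 * (h1*h2)) summable_on UNIV" and nz: "u \<noteq> (\<lambda>_. 0)" for u
  proof (rule ccontr)
    assume "\<not> ?thesis"
    then have le: "(\<Sum>\<^sub>\<infinity>z. (u z)^2 * (h1*h2)) \<le> 0" by simp
    obtain z where "u z \<noteq> 0" using nz by auto
    moreover have "(u z)^2 * (h1*h2) = 0"
      by (rule nonneg_infsum_le_0D[OF le su]) (use hh in auto)
    ultimately show False using h1 h2 by simp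
  qed
  have main: "(\<lambda>z. A_exp (\<bar>u z\<bar> / (C_S2 * W12_norm h1 h2 u)) * (h1 * h2)) summable_on UNIV \<and>
            (\<Sum>\<^sub>\<infinity>z. A_exp (\<bar>u z\<bar> / (C_S2 * W12_norm h1 h2 u)) * (h1 * h2)) \<le> 1"
    if W: "in_W12 h1 h2 u" and nz: "u \<noteq> (\<lambda>_. 0)" for u
  proof -
    have su: "(\<lambda>z. (u z)^2 * (h1*h2)) summable_on UNIV"
      and s1: "(\<lambda>z. (D1p h1 u z)^2 * (h1*h2)) summable_on UNIV"
      and s2: "(\<lambda>z. (D2p h2 u z)^2 * (h1*h2)) summable_on UNIV" using W by (auto simp: in_W12_def)
    show ?thesis unfolding W12_eq[OF h1 h2 su s1 s2] by (rule main_orlicz[OF h1 h2 su s1 s2 Upos[OF su nz]])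
  qed
  have Wpos: "W12_norm h1 h2 u > 0" if W: "in_W12 h1 h2 u" and nz: "u \<noteq> (\<lambda>_. 0)" for u
  proof -
    have su: "(\<lambda>z. (u z)^2 * (h1*h2)) summable_on UNIV"
      and s1: "(\<lambda>z. (D1p h1 u z)^2 * (h1*h2)) summable_on UNIV"
      and s2: "(\<lambda>z. (D2p h2 u z)^2 * (h1*h2)) summable_on UNIV" using W by (auto simp: in_W12_def)
    have "PP h1 h2 u \<ge> 0" by (rule PP_nonneg[OF h1 h2 su s1 s2])
    then show ?thesis unfolding W12_eq[OF h1 h2 su s1 s2] using Upos[OF su nz] by simp
  qed
  have part1: "orlicz_norm A_exp h1 h2 u \<le> C_S2 * W12_norm h1 h2 u" if W: "in_W12 h1 h2 u" for u
  proof (cases "u = (\<lambda>_. 0)")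
    case True
    have "{k. k > 0 \<and> (\<lambda>z. A_exp (\<bar>u z\<bar> / k) * (h1 * h2)) summable_on UNIV \<and>
            (\<Sum>\<^sub>\<infinity>z. A_exp (\<bar>u z\<bar> / k) * (h1 * h2)) \<le> 1} = {0<..}"
      using True by (auto simp: A_exp_def)
    then have "orlicz_norm A_exp h1 h2 u = 0" by (simp add: orlicz_norm_def)
    then show ?thesis using True W0 by simp
  next
    case False
    define k where "k = C_S2 * W12_norm h1 h2 u"
    have kpos: "k > 0" using Wpos[OF W False] C by (simp add: k_def)
    have "k \<in> {k. k > 0 \<and> (\<lambda>z. A_exp (\<bar>u z\<bar> / k) * (h1 * h2)) summable_on UNIV \<and>
            (\<Sum>\<^sub>\<infinity>z. A_exp (\<bar>u z\<bar> / k) * (h1 * h2)) \<le> 1}"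
      using main[OF W False] kpos by (simp add: k_def)
    then have "Inf {k. k > 0 \<and> (\<lambda>z. A_exp (\<bar>u z\<bar> / k) * (h1 * h2)) summable_on UNIV \<and>
            (\<Sum>\<^sub>\<infinity>z. A_exp (\<bar>u z\<bar> / k) * (h1 * h2)) \<le> 1} \<le> k"
      by (rule cInf_lower) (auto intro!: bdd_belowI[where m=0])
    then show ?thesis by (simp add: orlicz_norm_def k_def)
  qed
  have part3: "(\<lambda>z. \<bar>u z\<bar> powr p * (h1 * h2)) summable_on UNIV \<and>
            Lp_norm p h1 h2 u \<le> 2 * C_S2 * p * W12_norm h1 h2 u"
    if W: "in_W12 h1 h2 u" and p: "p \<ge> 2" for u p
  proof (cases "u = (\<lambda>_. 0)")
    case True
    then show ?thesis using p by (simp add: Lp_norm_def W0)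
  next
    case False
    define k where "k = C_S2 * W12_norm h1 h2 u"
    have kpos: "k > 0" using Wpos[OF W False] C by (simp add: k_def)
    define K where "K = (2*p*k) powr p"
    have Kpos: "K > 0" using kpos p by (simp add: K_def)
    have mk: "(\<lambda>z. A_exp (\<bar>u z\<bar> / k) * (h1 * h2)) summable_on UNIV"
         "(\<Sum>\<^sub>\<infinity>z. A_exp (\<bar>u z\<bar> / k) * (h1 * h2)) \<le> 1"
      using main[OF W False] by (simp_all add: k_def)
    have pt: "\<bar>u z\<bar> powr p * (h1 * h2) \<le> (A_exp (\<bar>u z\<bar> / k) * (h1 * h2)) * K" for z
    proof -
      have "\<bar>u z\<bar> = (2*p*k) * ((\<bar>u z\<bar> / k) / (2*p))" using kpos p by (simp add: field_simps)
      then have "\<bar>u z\<bar> powr p = K * ((\<bar>u z\<bar> / k) / (2*p)) powr p"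
        unfolding K_def by (metis abs_ge_zero powr_mult kpos p divide_nonneg_nonneg
             less_le mult_nonneg_nonneg zero_le_numeral order_trans[of 0 2 p] less_imp_le)
      also have "\<dots> \<le> K * A_exp (\<bar>u z\<bar> / k)"
        by (rule mult_left_mono[OF powr_A[OF p]]) (use kpos Kpos in auto)
      finally have "\<bar>u z\<bar> powr p \<le> K * A_exp (\<bar>u z\<bar> / k)" .
      then have "\<bar>u z\<bar> powr p * (h1*h2) \<le> K * A_exp (\<bar>u z\<bar> / k) * (h1*h2)"
        using hh by (intro mult_right_mono) auto
      then show ?thesis by (simp add: mult.commute mult.left_commute)
    qed
    have ps: "(\<lambda>z. \<bar>u z\<bar> powr p * (h1 * h2)) summable_on UNIV"
      by (rule summable_on_comparison_test[OF summable_on_cmult_left[OF mk(1), of K]]) (use pt hh in auto)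
    have "(\<Sum>\<^sub>\<infinity>z. \<bar>u z\<bar> powr p * (h1 * h2)) \<le> (\<Sum>\<^sub>\<infinity>z. (A_exp (\<bar>u z\<bar> / k) * (h1 * h2)) * K)"
      by (rule infsum_mono[OF ps summable_on_cmult_left[OF mk(1)]]) (use pt in auto)
    also have "\<dots> = (\<Sum>\<^sub>\<infinity>z. A_exp (\<bar>u z\<bar> / k) * (h1 * h2)) * K" by (rule infsum_cmult_left')
    also have "\<dots> \<le> K" using mk(2) Kpos by (simp add: mult_left_le_one_le)
    finally have sb: "(\<Sum>\<^sub>\<infinity>z. \<bar>u z\<bar> powr p * (h1 * h2)) \<le> K" .
    have s0: "0 \<le> (\<Sum>\<^sub>\<infinity>z. \<bar>u z\<bar> powr p * (h1 * h2))" by (rule infsum_nonneg) (use hh in simp)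
    have "Lp_norm p h1 h2 u \<le> K powr (1/p)" unfolding Lp_norm_def
      by (rule powr_mono2) (use p s0 sb in auto)
    also have "K powr (1/p) = 2*p*k" unfolding K_def using p kpos by (simp add: powr_powr)
    finally show ?thesis using ps by (simp add: k_def mult.assoc mult.left_commute)
  qed
  show ?thesis using part1 main part3 by blast
qed


end
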